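(* Let $n\ge 1$, $\nu>0$, and let $\alpha_u,\alpha_y\ge 0$ with $\max\{\alpha_u,\alpha_y\}>0$. Let $M\in\mathbb{R}^{n\times n}$ be diagonal with positive diagonal entries, let $L\in\mathbb{R}^{n\times n}$, and let $\Pi_k$ be an $n\times n$ diagonal matrix with diagonal entries in $\{0,1\}$. Set $\gamma_1=\frac{\alpha_y^2\nu}{\alpha_y^2\nu+\alpha_u^2}$, $\gamma_2=\frac{\alpha_u^2}{\alpha_y^2\nu+\alpha_u^2}$, $$\mathbb{S}_k=\nu LM^{-1}L^T+M-\frac{1}{\alpha_y^2\nu+\alpha_u^2}(\alpha_y\nu LM^{-1}-\alpha_u I)\Pi_k M\Pi_k(\alpha_y\nu LM^{-1}-\alpha_u I)^T,$$ $L_1=\sqrt{\nu}L(I-\gamma_1\Pi_k)^{1/2}+(I-\gamma_2\Pi_k)^{1/2}M$ and $\widehat{\mathbb{S}}_k=L_1M^{-1}L_1^T$, and assume $\widehat{\mathbb{S}}_k$ is nonsingular. Let $F=\sqrt{\nu}\,M^{-1/2}LM^{-1/2}$, assumed nonsingular, and define $$G_k=F(I-\Pi_k)+(I-\Pi_k)F^T,\qquad H_k=F(I-\gamma_1\Pi_k)F^T+(I-\gamma_2\Pi_k)+\sqrt{\gamma_1\gamma_2}\,(F\Pi_k+\Pi_kF^T).$$ Then $$\alpha_{\min}:=\min_{z\neq 0}\frac{z^TG_kz}{z^TH_kz}>-1,$$ and every eigenvalue $\lambda$ of the pencil $(\mathbb{S}_k,\widehat{\mathbb{S}}_k)$ (i.e.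 $\mathbb{S}_kx=\lambda\widehat{\mathbb{S}}_kx$ for some $x\neq 0$) satisfies $\lambda\in\left[\tfrac12,\ \tfrac{1}{1+\alpha_{\min}}\right]$.
   Context: Square roots of nonnegative diagonal matrices are taken entrywise; $M^{-1/2}$ is the diagonal matrix with entries $M_{ii}^{-1/2}$. *)

theory Defs
  imports "HOL-Analysis.Analysis"
begin

text \<open>Square n x n real matrices are rendered as real^'n^'n with 'n a finite index type.\<close>

definition is_diag :: "real^'n^'n \<Rightarrow> bool" where
  "is_diag A \<longleftrightarrow> (\<forall>i j. i \<noteq> j \<longrightarrow> A $ i $ j = 0)"

definition diag_mat :: "(('n::finite) \<Rightarrow> real) \<Rightarrow> real^'n^'n" where
  "diag_mat d = (\<chi> i j. if i = j then d i else 0)"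

text \<open>Entrywise square root of a (nonnegative) diagonal matrix.\<close>
definition diag_sqrt :: "real^'n^'n \<Rightarrow> real^'n^'n" where
  "diag_sqrt A = diag_mat (\<lambda>i. sqrt (A $ i $ i))"

text \<open>M^(-1/2) for a diagonal matrix with positive diagonal.\<close>
definition diag_inv_sqrt :: "real^'n^'n \<Rightarrow> real^'n^'n" where
  "diag_inv_sqrt A = diag_mat (\<lambda>i. 1 / sqrt (A $ i $ i))"

definition quad :: "real^'n^'n \<Rightarrow> real^'n \<Rightarrow> real" where
  "quad A z = z \<bullet> (A *v z)"

text \<open>lambda is an eigenvalue of the pencil (A,B): A x = lambda B x for some x \<noteq> 0.\<close>
definition pencil_eigenvalue :: "real^'n^'n \<Rightarrow> real^'n^'n \<Rightarrow> real \<Rightarrow> bool" where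
  "pencil_eigenvalue A B lam \<longleftrightarrow> (\<exists>x. x \<noteq> 0 \<and> A *v x = lam *\<^sub>R (B *v x))"

text \<open>a is the minimum over z \<noteq> 0 of the ratio z^T G z / z^T H z.\<close>
definition is_min_ratio :: "real^'n^'n \<Rightarrow> real^'n^'n \<Rightarrow> real \<Rightarrow> bool" where
  "is_min_ratio G H a \<longleftrightarrow>
     (\<exists>z. z \<noteq> 0 \<and> quad G z / quad H z = a) \<and>
     (\<forall>z. z \<noteq> 0 \<longrightarrow> a \<le> quad G z / quad H z)"

end

theory Submission
  imports Defs
begin


lemma diag_mul_left[simp]: "(diag_mat d ** A) $ i $ j = d i * A $ i $ j"
proof -
  have "(diag_mat d ** A) $ i $ j = (\<Sum>k\<in>UNIV. if k = i then d i * A $ i $ j else 0)"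
    unfolding diag_mat_def matrix_matrix_mult_def by (simp add: if_distrib[of "\<lambda>u. u * _"] cong: if_cong)
  then show ?thesis by simp
qed

lemma diag_mul_right[simp]: "(A ** diag_mat d) $ i $ j = A $ i $ j * d j"
  by (simp add: diag_mat_def matrix_matrix_mult_def if_distrib cong: if_cong)

lemma diag_entry[simp]: "diag_mat d $ i $ j = (if i = j then d i else 0)"
  by (simp add: diag_mat_def)

lemma diag_mulv[simp]: "(diag_mat d *v x) $ i = d i * x $ i"
proof -
  have "(diag_mat d *v x) $ i = (\<Sum>k\<in>UNIV. if k = i then d i * x $ i else 0)"
    unfolding diag_mat_def matrix_vector_mult_def by (simp add: if_distrib[of "\<lambda>u. u * _"] cong: if_cong)
  then show ?thesis by simp
qed

lemma diag_mat_eq: "is_diag A \<Longrightarrow> A = diag_mat (\<lambda>i. A $ i $ i)"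
  by (auto simp: is_diag_def vec_eq_iff)

lemma diag_diag: "diag_mat d ** diag_mat e = diag_mat (\<lambda>i. d i * e i)"
  by (simp add: vec_eq_iff)

lemma transpose_diag[simp]: "transpose (diag_mat d) = diag_mat d"
  by (simp add: vec_eq_iff transpose_def)

lemma mat1_diag: "(mat 1 :: real^'n^'n) = diag_mat (\<lambda>_. 1)"
  by (simp add: vec_eq_iff mat_def)

lemma quad_add: "quad (A + B) z = quad A z + quad B z"
  by (simp add: quad_def matrix_vector_mult_add_rdistrib inner_add_right)
lemma quad_diff: "quad (A - B) z = quad A z - quad B z"
  by (simp add: quad_def matrix_vector_mult_diff_rdistrib inner_diff_right)
lemma quad_scale: "quad (c *\<^sub>R A) z = c * quad A z"
  by (simp add: quad_def vec_eq_iff matrix_vector_mult_def inner_vec_def sum_distrib_left algebra_simps)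

lemma quad_sum: "quad A z = (\<Sum>i\<in>UNIV. z $ i * (A *v z) $ i)"
  by (simp add: quad_def inner_vec_def)

lemma quad_diag: "quad (diag_mat d) z = (\<Sum>k\<in>UNIV. d k * (z $ k)^2)"
  by (simp add: quad_sum power2_eq_square algebra_simps)

lemma quad_ADAt: "quad (A ** diag_mat d ** transpose A) z
   = (\<Sum>k\<in>UNIV. d k * ((transpose A *v z) $ k)^2)"
proof -
  have "quad (A ** diag_mat d ** transpose A) z = (transpose A *v z) \<bullet> (diag_mat d *v (transpose A *v z))"
    unfolding quad_def
    by (metis dot_lmul_matrix matrix_vector_mul_assoc transpose_matrix_vector)
  then show ?thesis by (simp add: inner_vec_def power2_eq_square algebra_simps)
qed

lemma quad_AD: "quad (A ** diag_mat d) z = (\<Sum>k\<in>UNIV. (transpose A *v z) $ k * d k * z $ k)"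
proof -
  have "quad (A ** diag_mat d) z = (transpose A *v z) \<bullet> (diag_mat d *v z)"
    unfolding quad_def
    by (metis dot_lmul_matrix matrix_vector_mul_assoc transpose_matrix_vector)
  then show ?thesis by (simp add: inner_vec_def algebra_simps)
qed

lemma quad_transpose: "quad (transpose A) z = quad A z"
  unfolding quad_def
  by (metis dot_lmul_matrix inner_commute transpose_matrix_vector)

lemma quad_homog: "quad A (c *\<^sub>R z) = c^2 * quad A z"
  by (simp add: quad_def matrix_vector_mult_scaleR power2_eq_square)


lemma keyS:
  fixes P s c ay au lt x q :: real
  assumes "P > 0" "c > 0" "q = 0 \<or> q = 1"
  shows "s^2 * (1/P^2 * lt^2) + P^2 * x^2 - 1/c * (q * P^2 * q * (ay * s^2 * lt / P^2 - au * x)^2)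
   = (1 - ay^2* s^2/c*q) * (s*lt/P)^2 + (1 - au^2/c*q)*(P*x)^2 + 2*(ay*au* s/c)*q*(s*lt/P)*(P*x)"
proof -
  have qq: "q*q = q" using assms(3) by auto
  have Pi: "P * inverse P = 1" using assms by simp
  from assms(3) show ?thesis
  proof
    assume "q = 0" then show ?thesis using assms by (simp add: field_simps)
  next
    assume q1: "q = 1"
    have "(ay * s^2 * lt / P^2 - au * x)^2 * P^2 = (ay* s*(s*lt/P) - au*(P*x))^2"
      using Pi unfolding divide_inverse power2_eq_square inverse_mult_distrib by algebra
    then have e3: "q * P^2 * q * (ay * s^2 * lt / P^2 - au * x)^2 = (ay* s*(s*lt/P) - au*(P*x))^2"
      unfolding q1 by (simp add: mult.commute)
    have e1: "s^2 * (1/P^2 * lt^2) = (s*lt/P)^2" by (simp add: power2_eq_square)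
    have e2: "P^2 * x^2 = (P*x)^2" by (simp add: power2_eq_square)
    show ?thesis unfolding e1 e2 e3 unfolding q1 divide_inverse power2_eq_square by algebra
  qed
qed

lemma keyShat:
  fixes P s d1 d2 g1 g2 r lt x q :: real
  assumes "P > 0" "d1^2 = 1 - g1*q" "d2^2 = 1 - g2*q" "d1*d2 = r*q + (1 - q)"
  shows "1/P^2 * (s*d1*lt + d2*P^2*x)^2
   = (1 - g1*q) * (s*lt/P)^2 + (1 - g2*q)*(P*x)^2 + 2*r*q*(s*lt/P)*(P*x) + 2*(1-q)*(s*lt/P)*(P*x)"
proof -
  have Pi: "P * inverse P = 1" using assms by simp
  show ?thesis using assms(2-4) Pi unfolding divide_inverse power2_eq_square inverse_mult_distrib by algebra
qed

lemma keyNN: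
  fixes g1 g2 r q a y :: real
  assumes "q = 0 \<or> q = 1" "g1 \<ge> 0" "g2 \<ge> 0" "g1 + g2 = 1" "r = sqrt (g1 * g2)"
  shows "2*(1-q)*a*y \<le> (1-g1*q)*a^2 + (1-g2*q)*y^2 + 2*r*q*a*y"
    and "0 \<le> (1-g1*q)*a^2 + (1-g2*q)*y^2 + 2*r*q*a*y"
proof -
  have "2*(1-q)*a*y \<le> (1-g1*q)*a^2 + (1-g2*q)*y^2 + 2*r*q*a*y
      \<and> 0 \<le> (1-g1*q)*a^2 + (1-g2*q)*y^2 + 2*r*q*a*y"
    using assms(1)
  proof
    assume "q = 0" then show ?thesis by (simp add: sum_squares_bound)
  next
    assume q: "q = 1"
    have e: "(1-g1*q)*a^2 + (1-g2*q)*y^2 + 2*r*q*a*y = (sqrt g2 * a + sqrt g1 * y)^2"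
    proof -
      have h1: "1 - g1 = g2" "1 - g2 = g1" using assms(4) by auto
      have "(sqrt g2 * a + sqrt g1 * y)^2 = (sqrt g2)^2 * a^2 + (sqrt g1)^2 * y^2 + 2 * (sqrt g1 * sqrt g2) * a * y"
        by (simp add: power2_sum power_mult_distrib algebra_simps)
      also have "\<dots> = g2 * a^2 + g1 * y^2 + 2 * r * a * y"
        using assms(2,3,5) by (simp add: real_sqrt_mult)
      finally show ?thesis unfolding q using h1 by simp
    qed
    show ?thesis unfolding e using q by simp
  qed
  then show "2*(1-q)*a*y \<le> (1-g1*q)*a^2 + (1-g2*q)*y^2 + 2*r*q*a*y"
    and "0 \<le> (1-g1*q)*a^2 + (1-g2*q)*y^2 + 2*r*q*a*y" by auto
qed


theorem proposition4p3:
  fixes M L Pi :: "real^'n^'n" and \<nu> au ay :: real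
  assumes nu_pos: "\<nu> > 0"
    and au: "au \<ge> 0" and ay: "ay \<ge> 0" and amax: "max au ay > 0"
    and M_diag: "is_diag M" and M_pos: "\<forall>i. M $ i $ i > 0"
    and Pi_diag: "is_diag Pi" and Pi_01: "\<forall>i. Pi $ i $ i = 0 \<or> Pi $ i $ i = 1"
  defines "g1 \<equiv> ay^2 * \<nu> / (ay^2 * \<nu> + au^2)"
    and "g2 \<equiv> au^2 / (ay^2 * \<nu> + au^2)"
    and "Minv \<equiv> matrix_inv M"
    and "I \<equiv> (mat 1 :: real^'n^'n)"
  defines "S \<equiv> \<nu> *\<^sub>R (L ** Minv ** transpose L) + M
      - (1 / (ay^2 * \<nu> + au^2)) *\<^sub>R
        ((ay * \<nu>) *\<^sub>R (L ** Minv) - au *\<^sub>R I) ** Pi ** M ** Pi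
          ** transpose ((ay * \<nu>) *\<^sub>R (L ** Minv) - au *\<^sub>R I)"
    and "L1 \<equiv> sqrt \<nu> *\<^sub>R (L ** diag_sqrt (I - g1 *\<^sub>R Pi)) + diag_sqrt (I - g2 *\<^sub>R Pi) ** M"
  defines "Shat \<equiv> L1 ** Minv ** transpose L1"
    and "F \<equiv> sqrt \<nu> *\<^sub>R (diag_inv_sqrt M ** L ** diag_inv_sqrt M)"
  defines "G \<equiv> F ** (I - Pi) + (I - Pi) ** transpose F"
    and "H \<equiv> F ** (I - g1 *\<^sub>R Pi) ** transpose F + (I - g2 *\<^sub>R Pi)
             + sqrt (g1 * g2) *\<^sub>R (F ** Pi + Pi ** transpose F)"
  assumes Shat_inv: "invertible Shat"
    and F_inv: "invertible F"
  shows "\<exists>amin. is_min_ratio G H amin \<and> amin > -1 \<and>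
           (\<forall>lam. pencil_eigenvalue S Shat lam \<longrightarrow> lam \<in> {1/2 .. 1 / (1 + amin)})"
proof -
  define m where "m i = M $ i $ i" for i
  define pp where "pp i = Pi $ i $ i" for i
  have Mdef: "M = diag_mat m" using diag_mat_eq[OF M_diag] unfolding m_def by simp
  have Pidef: "Pi = diag_mat pp" using diag_mat_eq[OF Pi_diag] unfolding pp_def by simp
  have pp01: "pp i = 0 \<or> pp i = 1" for i using Pi_01 pp_def by auto
  define p where "p i = sqrt (m i)" for i
  define s where "s = sqrt \<nu>"
  define c where "c = ay^2 * \<nu> + au^2"
  have c_pos: "c > 0"
  proof (cases "au > 0")
    case True then show ?thesis unfolding c_def using nu_pos by (simp add: add_nonneg_pos)
  next
    case False then have "ay > 0" using amax au by auto
    then show ?thesis unfolding c_def using nu_pos au by (simp add: add_pos_nonneg)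
  qed
  have mpos: "m i > 0" for i using M_pos m_def by auto
  have ppos: "p i > 0" for i using mpos p_def by auto
  have pne: "p i \<noteq> 0" for i using ppos[of i] by simp
  have psq: "(p i)^2 = m i" for i using mpos[of i] p_def by simp
  have spos: "s > 0" using nu_pos s_def by auto
  have ssq: "s^2 = \<nu>" using nu_pos s_def by simp
  have Idef: "I = diag_mat (\<lambda>_. 1)" unfolding I_def by (rule mat1_diag)
  have Minv_eq: "Minv = diag_mat (\<lambda>i. 1 / m i)"
  proof -
    define B where "B = diag_mat (\<lambda>i. 1 / m i)"
    have B1: "M ** B = mat 1" "B ** M = mat 1"
      using mpos by (simp_all add: B_def Mdef diag_diag mat1_diag less_imp_neq[symmetric])
    let ?P = "\<lambda>A'. M ** A' = mat 1 \<and> A' ** M = mat 1"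
    have "?P (SOME A'. ?P A')" using B1 by (rule someI[of ?P B, OF conjI])
    then have "(SOME A'. ?P A') = B"
    proof -
      assume h: "?P (SOME A'. ?P A')"
      let ?A = "SOME A'. ?P A'"
      have "?A = ?A ** (M ** B)" using B1 by simp
      also have "\<dots> = (?A ** M) ** B" by (simp add: matrix_mul_assoc)
      also have "\<dots> = B" using h by simp
      finally show ?thesis .
    qed
    then show ?thesis unfolding Minv_def matrix_inv_def B_def by simp
  qed
  have D1: "diag_sqrt (I - g1 *\<^sub>R Pi) = diag_mat (\<lambda>i. sqrt (1 - g1 * pp i))"
    by (simp add: diag_sqrt_def Idef Pidef)
  have D2: "diag_sqrt (I - g2 *\<^sub>R Pi) = diag_mat (\<lambda>i. sqrt (1 - g2 * pp i))"
    by (simp add: diag_sqrt_def Idef Pidef)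
  have Qeq: "diag_inv_sqrt M = diag_mat (\<lambda>i. 1 / p i)"
    by (simp add: diag_inv_sqrt_def Mdef p_def)
  have Fent: "F $ i $ k = s * (L $ i $ k / (p i * p k))" for i k
    by (simp add: F_def Qeq s_def)
  define r where "r = sqrt (g1 * g2)"
  have g1e: "g1 = ay^2 * s^2 / c" unfolding g1_def c_def ssq ..
  have g2e: "g2 = au^2 / c" unfolding g2_def c_def ..
  have re: "r = ay * au * s / c"
  proof -
    have "g1 * g2 = (ay * au * s / c)^2" unfolding g1e g2e by (simp add: power2_eq_square)
    moreover have "ay * au * s / c \<ge> 0" using ay au spos c_pos by simp
    ultimately show ?thesis unfolding r_def by (metis real_sqrt_abs abs_of_nonneg)
  qed
  have g12: "g1 + g2 = 1"
  proof -
    have "ay^2 * s^2 + au^2 = c" by (simp add: c_def ssq)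
    then show ?thesis unfolding g1e g2e using c_pos by (metis add_divide_distrib less_irrefl divide_self)
  qed
  have g1nn: "g1 \<ge> 0" "g2 \<ge> 0" unfolding g1e g2e using c_pos by auto
  define lt where "lt x k = (\<Sum>i\<in>UNIV. x $ i * L $ i $ k)" for x k
  define aa where "aa y k = (transpose F *v y) $ k" for y k
  have a_eq: "aa (diag_mat p *v x) k = s * lt x k / p k" for x k
  proof -
    have "aa (diag_mat p *v x) k = (\<Sum>i\<in>UNIV. (p i * x $ i) * F $ i $ k)"
      unfolding aa_def transpose_matrix_vector by (simp add: vector_matrix_mult_def)
    also have "\<dots> = (\<Sum>i\<in>UNIV. s / p k * (x $ i * L $ i $ k))"
      by (rule sum.cong) (auto simp: Fent field_simps pne)
    finally show ?thesis unfolding lt_def by (simp add: sum_distrib_left sum_divide_distrib)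
  qed
  have DI1: "I - g1 *\<^sub>R Pi = diag_mat (\<lambda>k. 1 - g1 * pp k)" by (simp add: Idef Pidef vec_eq_iff)
  have DI2: "I - g2 *\<^sub>R Pi = diag_mat (\<lambda>k. 1 - g2 * pp k)" by (simp add: Idef Pidef vec_eq_iff)
  have DI: "I - Pi = diag_mat (\<lambda>k. 1 - pp k)" by (simp add: Idef Pidef vec_eq_iff)
  have HQ: "quad H y = (\<Sum>k\<in>UNIV. (1 - g1 * pp k) * (aa y k)^2 + (1 - g2 * pp k) * (y $ k)^2
      + 2 * r * pp k * aa y k * y $ k)" for y
  proof -
    have Heq: "H = F ** diag_mat (\<lambda>k. 1 - g1 * pp k) ** transpose F + diag_mat (\<lambda>k. 1 - g2 * pp k)
       + r *\<^sub>R (F ** diag_mat pp + transpose (F ** diag_mat pp))"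
      unfolding H_def DI1 DI2 r_def by (simp add: Pidef matrix_transpose_mul)
    have "quad H y = (\<Sum>k\<in>UNIV. (1 - g1 * pp k) * (aa y k)^2) + (\<Sum>k\<in>UNIV. (1 - g2 * pp k) * (y $ k)^2)
       + r * (2 * (\<Sum>k\<in>UNIV. aa y k * pp k * y $ k))"
      unfolding Heq quad_add quad_scale quad_transpose quad_ADAt quad_AD quad_diag aa_def by simp
    also have "\<dots> = (\<Sum>k\<in>UNIV. (1 - g1 * pp k) * (aa y k)^2 + (1 - g2 * pp k) * (y $ k)^2
      + 2 * r * pp k * aa y k * y $ k)"
      unfolding sum_distrib_left sum.distrib[symmetric] by (rule sum.cong) (simp_all add: algebra_simps)
    finally show ?thesis .
  qed
  have GQ: "quad G y = (\<Sum>k\<in>UNIV. 2 * (1 - pp k) * aa y k * y $ k)" for y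
  proof -
    have Geq: "G = F ** diag_mat (\<lambda>k. 1 - pp k) + transpose (F ** diag_mat (\<lambda>k. 1 - pp k))"
      unfolding G_def DI by (simp add: matrix_transpose_mul)
    show ?thesis unfolding Geq quad_add quad_transpose quad_AD aa_def
      by (simp add: sum_distrib_left algebra_simps)
  qed
  have ltL: "(transpose L *v x) $ k = lt x k" for x k
    unfolding transpose_matrix_vector lt_def by (simp add: vector_matrix_mult_def)
  define Y where "Y = (ay * \<nu>) *\<^sub>R (L ** Minv) - au *\<^sub>R I"
  have ltY: "(transpose Y *v x) $ k = ay * \<nu> * lt x k / m k - au * x $ k" for x k
  proof -
    have "(transpose Y *v x) $ k = (\<Sum>i\<in>UNIV. ay * \<nu> / m k * (x $ i * L $ i $ k)
        - (if i = k then au * x $ k else 0))"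
      unfolding transpose_matrix_vector vector_matrix_mult_def Y_def Minv_eq Idef
      by (simp, rule sum.cong) (auto simp: algebra_simps)
    also have "\<dots> = ay * \<nu> * lt x k / m k - au * x $ k"
      unfolding sum_subtractf lt_def by (simp add: sum_distrib_left sum_divide_distrib)
    finally show ?thesis .
  qed
  have SQ: "quad S x = quad H (diag_mat p *v x)" for x
  proof -
    have PMP: "Pi ** M ** Pi = diag_mat (\<lambda>k. pp k * m k * pp k)"
      by (simp add: Pidef Mdef diag_diag)
    have "Y ** Pi ** M ** Pi = Y ** diag_mat (\<lambda>k. pp k * m k * pp k)"
      unfolding PMP[symmetric] by (simp add: matrix_mul_assoc)
    then have Seq: "S = \<nu> *\<^sub>R (L ** diag_mat (\<lambda>i. 1 / m i) ** transpose L) + diag_mat m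
        - (1 / c) *\<^sub>R (Y ** diag_mat (\<lambda>k. pp k * m k * pp k) ** transpose Y)"
      unfolding S_def c_def Y_def[symmetric] Minv_eq[symmetric] Mdef[symmetric] by (simp add: scalar_matrix_assoc[symmetric])
    have "quad S x = (\<Sum>k\<in>UNIV. \<nu> * (1 / m k * (lt x k)^2) + m k * (x $ k)^2
        - 1 / c * (pp k * m k * pp k * (ay * \<nu> * lt x k / m k - au * x $ k)^2))"
      unfolding Seq quad_add quad_diff quad_scale quad_ADAt quad_diag ltL ltY
      by (simp add: sum.distrib sum_subtractf sum_distrib_left)
    also have "\<dots> = quad H (diag_mat p *v x)"
      unfolding HQ
    proof (rule sum.cong)
      fix k
      show "\<nu> * (1 / m k * (lt x k)^2) + m k * (x $ k)^2
        - 1 / c * (pp k * m k * pp k * (ay * \<nu> * lt x k / m k - au * x $ k)^2)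
        = (1 - g1 * pp k) * (aa (diag_mat p *v x) k)^2 + (1 - g2 * pp k) * ((diag_mat p *v x) $ k)^2
      + 2 * r * pp k * aa (diag_mat p *v x) k * (diag_mat p *v x) $ k"
        unfolding a_eq diag_mulv g1e g2e re ssq[symmetric] psq[symmetric]
        using keyS[of "p k" c "pp k" s "lt x k" "x $ k" ay au] ppos c_pos pp01
        by (simp add: algebra_simps)
    qed simp
    finally show ?thesis .
  qed
  define d1 where "d1 k = sqrt (1 - g1 * pp k)" for k
  define d2 where "d2 k = sqrt (1 - g2 * pp k)" for k
  have d1sq: "(d1 k)^2 = 1 - g1 * pp k" for k
    unfolding d1_def using pp01[of k] g12 g1nn by (intro real_sqrt_pow2) auto
  have d2sq: "(d2 k)^2 = 1 - g2 * pp k" for k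
    unfolding d2_def using pp01[of k] g12 g1nn by (intro real_sqrt_pow2) auto
  have d12: "d1 k * d2 k = r * pp k + (1 - pp k)" for k
    using pp01[of k]
  proof
    assume "pp k = 0" then show ?thesis by (simp add: d1_def d2_def)
  next
    assume h: "pp k = 1"
    have "1 - g1 = g2" "1 - g2 = g1" using g12 by auto
    then show ?thesis using h g1nn unfolding d1_def d2_def r_def
      by (simp add: real_sqrt_mult[symmetric] mult.commute)
  qed
  have L1eq: "L1 = s *\<^sub>R (L ** diag_mat d1) + diag_mat (\<lambda>k. d2 k * m k)"
    unfolding L1_def D1 D2 s_def[symmetric] d1_def[symmetric] d2_def[symmetric]
    by (simp add: Mdef diag_diag)
  have ltL1: "(transpose L1 *v x) $ k = s * d1 k * lt x k + d2 k * m k * x $ k" for x k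
  proof -
    have "(transpose L1 *v x) $ k = (\<Sum>i\<in>UNIV. s * d1 k * (x $ i * L $ i $ k)
        + (if i = k then d2 k * m k * x $ k else 0))"
      unfolding transpose_matrix_vector vector_matrix_mult_def L1eq
      by (simp, rule sum.cong) (auto simp: algebra_simps)
    also have "\<dots> = s * d1 k * lt x k + d2 k * m k * x $ k"
      unfolding sum.distrib lt_def by (simp add: sum_distrib_left)
    finally show ?thesis .
  qed
  have ShQ: "quad Shat x = quad H (diag_mat p *v x) + quad G (diag_mat p *v x)" for x
  proof -
    have "quad Shat x = (\<Sum>k\<in>UNIV. 1 / m k * (s * d1 k * lt x k + d2 k * m k * x $ k)^2)"
      unfolding Shat_def Minv_eq quad_ADAt ltL1 ..
    also have "\<dots> = quad H (diag_mat p *v x) + quad G (diag_mat p *v x)"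
      unfolding HQ GQ sum.distrib[symmetric]
    proof (rule sum.cong)
      fix k
      show "1 / m k * (s * d1 k * lt x k + d2 k * m k * x $ k)^2
        = (1 - g1 * pp k) * (aa (diag_mat p *v x) k)^2 + (1 - g2 * pp k) * ((diag_mat p *v x) $ k)^2
      + 2 * r * pp k * aa (diag_mat p *v x) k * (diag_mat p *v x) $ k
      + 2 * (1 - pp k) * aa (diag_mat p *v x) k * (diag_mat p *v x) $ k"
        unfolding a_eq diag_mulv psq[symmetric]
        using keyShat[of "p k" "d1 k" g1 "pp k" "d2 k" g2 r s "lt x k" "x $ k"] ppos d1sq d2sq d12
        by (simp add: algebra_simps)
    qed simp
    finally show ?thesis .
  qed
  have GleH: "quad G y \<le> quad H y" for y
    unfolding HQ GQ
    by (rule sum_mono) (rule keyNN(1)[OF pp01 g1nn g12 r_def])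
  have Hnn: "quad H y \<ge> 0" for y
    unfolding HQ
    by (rule sum_nonneg) (rule keyNN(2)[OF pp01 g1nn g12 r_def])
  have Shat_pos: "quad Shat x > 0" if "x \<noteq> 0" for x
  proof -
    define t where "t = transpose L1 *v x"
    have qs: "quad Shat x = (\<Sum>k\<in>UNIV. 1 / m k * (t $ k)^2)"
      unfolding Shat_def Minv_eq quad_ADAt t_def ..
    have nn: "\<forall>k\<in>UNIV. 0 \<le> 1 / m k * (t $ k)^2" using mpos by (simp add: less_imp_le)
    have "quad Shat x \<noteq> 0"
    proof
      assume "quad Shat x = 0"
      then have "(\<Sum>k\<in>UNIV. 1 / m k * (t $ k)^2) = 0" using qs by simp
      then have "\<forall>k\<in>UNIV. 1 / m k * (t $ k)^2 = 0" using sum_nonneg_eq_0_iff[of UNIV "\<lambda>k. 1 / m k * (t $ k)^2"] nn by simp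
      then have "t = 0" using mpos by (auto simp: vec_eq_iff less_imp_neq[symmetric])
      then have "Shat *v x = 0"
        unfolding Shat_def t_def by (simp flip: matrix_vector_mul_assoc)
      then have "Shat *v x = Shat *v 0" by simp
      then have "x = 0" using inj_matrix_vector_mult[OF Shat_inv] unfolding inj_def by blast
      then show False using that by simp
    qed
    moreover have "quad Shat x \<ge> 0" unfolding qs using nn by (simp add: sum_nonneg)
    ultimately show ?thesis by simp
  qed
  have pinv: "diag_mat p *v (diag_mat (\<lambda>i. 1 / p i) *v y) = y" for y
    by (simp add: vec_eq_iff pne)
  have HGpos: "quad H y + quad G y > 0" if "y \<noteq> 0" for y
  proof -
    define x where "x = diag_mat (\<lambda>i. 1 / p i) *v y"
    have "x \<noteq> 0" using that pinv[of y] unfolding x_def by auto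
    then have "quad Shat x > 0" by (rule Shat_pos)
    then show ?thesis using ShQ[of x] pinv[of y] unfolding x_def by simp
  qed
  have Hpos: "quad H y > 0" if "y \<noteq> 0" for y
    using HGpos[OF that] GleH[of y] by linarith
  define f where "f z = quad G z / quad H z" for z
  have "\<exists>z\<in>sphere (0::real^'n) 1. \<forall>w\<in>sphere 0 1. f z \<le> f w"
  proof (rule continuous_attains_inf)
    show "compact (sphere (0::real^'n) 1)" by simp
    show "sphere (0::real^'n) 1 \<noteq> {}" by simp
    have "continuous_on (sphere 0 1) (\<lambda>z::real^'n. z \<bullet> (G *v z) / (z \<bullet> (H *v z)))"
    proof -
      have hz: "z \<bullet> (H *v z) \<noteq> 0" if "z \<in> sphere 0 1" for z :: "real^'n"
      proof -
        have "z \<noteq> 0" using that by auto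
        then show ?thesis using Hpos[of z] unfolding quad_def by simp
      qed
      show ?thesis by (intro continuous_intros) (use hz in blast)
    qed
    then show "continuous_on (sphere 0 1) f" unfolding f_def quad_def .
  qed
  then obtain z0 where z0: "norm z0 = 1" "\<And>w. norm w = 1 \<Longrightarrow> f z0 \<le> f w" by auto
  have z0ne: "z0 \<noteq> 0" using z0 by auto
  have fhom: "f z = f ((1 / norm z) *\<^sub>R z)" if "z \<noteq> 0" for z
    using that unfolding f_def quad_homog by simp
  have fmin: "f z0 \<le> f z" if "z \<noteq> 0" for z
  proof -
    have "norm ((1 / norm z) *\<^sub>R z) = 1" using that by simp
    then have "f z0 \<le> f ((1 / norm z) *\<^sub>R z)" by (rule z0(2))
    then show ?thesis by (subst fhom[OF that])
  qed
  have ismin: "is_min_ratio G H (f z0)"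
    unfolding is_min_ratio_def
  proof (intro conjI allI impI)
    show "\<exists>z. z \<noteq> 0 \<and> quad G z / quad H z = f z0" using z0ne unfolding f_def by blast
    fix z :: "real^'n" assume "z \<noteq> 0"
    then show "f z0 \<le> quad G z / quad H z" using fmin unfolding f_def by simp
  qed
  have gt: "f z0 > -1"
  proof -
    have "quad G z0 > - quad H z0" using HGpos[OF z0ne] by linarith
    then show ?thesis unfolding f_def using Hpos[OF z0ne] by (simp add: less_divide_eq)
  qed
  have eig: "lam \<in> {1/2 .. 1 / (1 + f z0)}" if "pencil_eigenvalue S Shat lam" for lam
  proof -
    from that obtain x where xx: "x \<noteq> 0 \<and> S *v x = lam *\<^sub>R (Shat *v x)"
      unfolding pencil_eigenvalue_def by (rule exE)
    then have x: "x \<noteq> 0" "S *v x = lam *\<^sub>R (Shat *v x)" by simp_all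
    define y where "y = diag_mat p *v x"
    have yne: "y \<noteq> 0"
    proof
      assume "y = 0"
      then have h: "p i * x $ i = 0" for i unfolding y_def by (metis diag_mulv zero_index)
      have "x $ i = 0" for i using h[of i] pne[of i] by simp
      then show False using x(1) by (simp add: vec_eq_iff)
    qed
    have "quad S x = lam * quad Shat x" unfolding quad_def x(2) by (simp only: inner_scaleR_right)
    then have e: "quad H y = lam * (quad H y + quad G y)" unfolding SQ ShQ y_def .
    define T where "T = quad H y + quad G y"
    have Tpos: "T > 0" using HGpos[OF yne] unfolding T_def .
    have hp: "quad H y > 0" using Hpos[OF yne] .
    have le: "quad G y \<le> quad H y" by (rule GleH)
    have e2: "quad H y = lam * T" using e unfolding T_def .
    have lampos: "lam > 0"
    proof (rule ccontr)
      assume "\<not> lam > 0"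
      then have "lam * T \<le> 0" using Tpos by (simp add: mult_nonpos_nonneg)
      then show False using e2 hp by linarith
    qed
    have hh: "\<And>a b::real. b \<le> a \<Longrightarrow> 1/2*(a+b) \<le> a" by (simp add: field_simps)
    have "(1/2) * T \<le> quad H y" using hh[OF le] unfolding T_def .
    then have "(1/2) * T \<le> lam * T" using e2 by simp
    then have l1: "lam \<ge> 1/2" using Tpos by (rule mult_right_le_imp_le)
    have am0: "f z0 \<le> quad G y / quad H y" using fmin[OF yne] unfolding f_def .
    have am: "f z0 * quad H y \<le> quad G y" using am0 hp by (simp add: le_divide_eq)
    have "lam * (f z0 * quad H y) \<le> lam * quad G y" using am lampos by (simp add: mult_left_mono)
    then have "lam * (1 + f z0) * quad H y \<le> lam * T" unfolding T_def by (simp add: algebra_simps)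
    then have "(lam * (1 + f z0)) * quad H y \<le> 1 * quad H y" using e2 by simp
    then have "lam * (1 + f z0) \<le> 1" using hp by (rule mult_right_le_imp_le)
    then show ?thesis using l1 gt by (simp add: le_divide_eq mult.commute)
  qed
  show ?thesis
  proof (intro exI[of _ "f z0"] conjI allI impI)
    show "is_min_ratio G H (f z0)" by (rule ismin)
    show "f z0 > -1" by (rule gt)
    fix lam assume "pencil_eigenvalue S Shat lam"
    then show "lam \<in> {1/2 .. 1 / (1 + f z0)}" by (rule eig)
  qed
qed
end
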